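(* Let $\ell\geq 1$ and let $G\subseteq\mathcal{G}_\Sigma^\ell$ be a non-empty finite set of generalized strings of length $\ell$. Then $\mathrm{NFA}(G)$ is a simple NFA.
   Context: For a finite alphabet $\Sigma$, $\mathcal{G}_\Sigma=\mathcal{P}(\Sigma)\setminus\{\emptyset\}$ and a generalized string is a finite string $g=g[1]\cdots g[|g|]$ over $\mathcal{G}_\Sigma$; $\mathcal{G}_\Sigma^\ell$ is the set of generalized strings of length $\ell$. Construction of $\mathrm{NFA}(G)$: let $\bar Q=\mathcal{P}(G)\times\{0,\dots,\ell\}$ and define $\mathrm{Parent}:\bar Q\times\Sigma\to\bar Q\cup\{\bot\}$ by $\mathrm{Parent}((H,k),\sigma)=(\{h\in H:\sigma\in h[k]\},k-1)$ if $k>0$ and $\bot$ if $k=0$. Set $Q_\ell=\{(G,\ell)\}$ and, for $i=\ell-1,\dots,0$, $Q_i=\{(H,i): H\subseteq G,\ H\neq\emptyset,\ \exists q\in Q_{i+1},\sigma\in\Sigma \text{ with } \mathrm{Parent}(q,\sigma)=(H,i)\}$. Let $Q=Q_0\cup\dots\cup Q_\ell$, $\Delta((H,k),\sigma)=\{q\in Q_{k+1}:\mathrm{Parent}(q,\sigma)=(H,k)\}$ if $k<\ell$ and $\emptyset$ if $k=\ell$, $Q_\alpha=Q_0$, $F=Q_\ell$. Then $\mathrm{NFA}(G)=(Q,\Sigma,\Delta,Q_\alpha,F)$. For an NFA, $\hat\Delta$ is the extension of $\Delta$ to strings ($\hat\Delta(q,\varepsilon)=\{q\}$, $\hat\Delta(q,\sigma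 s)=\bigcup_{p\in\Delta(q,\sigma)}\hat\Delta(p,s)$), the language of a state is $\mathcal{L}(q)=\{s\in\Sigma^*:\hat\Delta(q,s)\cap F\neq\emptyset\}$, and a state $q$ is accessible if $q\in\hat\Delta(q_\alpha,s)$ for some $q_\alpha\in Q_\alpha$, $s\in\Sigma^*$. An NFA is called simple if all its states are accessible and the languages $\mathcal{L}(q)$, $q\in Q$, are non-empty and pairwise disjoint. *)

theory Defs
  imports Main
begin

type_synonym ('s, 'a) nfa = "'s set \<times> 'a set \<times> ('s \<Rightarrow> 'a \<Rightarrow> 's set) \<times> 's set \<times> 's set"

fun delta_hat :: "('s \<Rightarrow> 'a \<Rightarrow> 's set) \<Rightarrow> 's \<Rightarrow> 'a list \<Rightarrow> 's set" where
  "delta_hat \<Delta> q [] = {q}"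
| "delta_hat \<Delta> q (\<sigma> # s) = (\<Union>p\<in>\<Delta> q \<sigma>. delta_hat \<Delta> p s)"

definition nfa_lang :: "('s, 'a) nfa \<Rightarrow> 's \<Rightarrow> 'a list set" where
  "nfa_lang A q = (case A of (Q, \<Sigma>, \<Delta>, Qa, F) \<Rightarrow>
     {s \<in> lists \<Sigma>. delta_hat \<Delta> q s \<inter> F \<noteq> {}})"

definition nfa_accessible :: "('s, 'a) nfa \<Rightarrow> 's \<Rightarrow> bool" where
  "nfa_accessible A q = (case A of (Q, \<Sigma>, \<Delta>, Qa, F) \<Rightarrow>
     (\<exists>qa\<in>Qa. \<exists>s\<in>lists \<Sigma>. q \<in> delta_hat \<Delta> qa s))"

definition simple_nfa :: "('s, 'a) nfa \<Rightarrow> bool" where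
  "simple_nfa A = (case A of (Q, \<Sigma>, \<Delta>, Qa, F) \<Rightarrow>
     (\<forall>q\<in>Q. nfa_accessible A q) \<and>
     (\<forall>q\<in>Q. nfa_lang A q \<noteq> {}) \<and>
     (\<forall>p\<in>Q. \<forall>q\<in>Q. p \<noteq> q \<longrightarrow> nfa_lang A p \<inter> nfa_lang A q = {}))"

text \<open>A generalized string over Sigma is a list of non-empty subsets of Sigma;
  position k (1-based, as in the paper) of g is g ! (k - 1).\<close>

definition gen_strings :: "'a set \<Rightarrow> nat \<Rightarrow> 'a set list set" where
  "gen_strings \<Sigma> l = {g. length g = l \<and> (\<forall>x\<in>set g. x \<noteq> {} \<and> x \<subseteq> \<Sigma>)}"

type_synonym 'a gstate = "'a set list set \<times> nat"

definition Parent :: "'a gstate \<Rightarrow> 'a \<Rightarrow> 'a gstate option" where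
  "Parent q \<sigma> = (case q of (H, k) \<Rightarrow>
     if k > 0 then Some ({h\<in>H. \<sigma> \<in> h ! (k - 1)}, k - 1) else None)"

text \<open>lev n is the level Q_{l-n}, built downward from Q_l = {(G,l)}.\<close>
fun lev :: "'a set \<Rightarrow> 'a set list set \<Rightarrow> nat \<Rightarrow> nat \<Rightarrow> 'a gstate set" where
  "lev \<Sigma> G l 0 = {(G, l)}"
| "lev \<Sigma> G l (Suc n) = {(H, i) | H i. i = l - Suc n \<and> H \<subseteq> G \<and> H \<noteq> {} \<and>
       (\<exists>q\<in>lev \<Sigma> G l n. \<exists>\<sigma>\<in>\<Sigma>. Parent q \<sigma> = Some (H, i))}"

definition Qlev :: "'a set \<Rightarrow> 'a set list set \<Rightarrow> nat \<Rightarrow> nat \<Rightarrow> 'a gstate set" where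
  "Qlev \<Sigma> G l i = (if i \<le> l then lev \<Sigma> G l (l - i) else {})"

definition NFA_of :: "'a set \<Rightarrow> nat \<Rightarrow> 'a set list set \<Rightarrow> ('a gstate, 'a) nfa" where
  "NFA_of \<Sigma> l G =
     ((\<Union>i\<in>{0..l}. Qlev \<Sigma> G l i),
      \<Sigma>,
      (\<lambda>(H, k) \<sigma>. if k < l \<and> \<sigma> \<in> \<Sigma>
                   then {q \<in> Qlev \<Sigma> G l (k + 1). Parent q \<sigma> = Some (H, k)} else {}),
      Qlev \<Sigma> G l 0,
      Qlev \<Sigma> G l l)"

end

theory Submission
  imports Defs
begin

definition dl :: "'a set \<Rightarrow> 'a set list set \<Rightarrow> nat \<Rightarrow> 'a gstate \<Rightarrow> 'a \<Rightarrow> 'a gstate set" where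
  "dl \<Sigma> G l = (\<lambda>(H, k) \<sigma>. if k < l \<and> \<sigma> \<in> \<Sigma>
                   then {q \<in> Qlev \<Sigma> G l (k + 1). Parent q \<sigma> = Some (H, k)} else {})"

lemma NFA_of_eq: "NFA_of \<Sigma> l G = ((\<Union>i\<in>{0..l}. Qlev \<Sigma> G l i), \<Sigma>, dl \<Sigma> G l, Qlev \<Sigma> G l 0, Qlev \<Sigma> G l l)"
  by (simp add: NFA_of_def dl_def)

definition mt :: "'a set list set \<Rightarrow> 'a list \<Rightarrow> nat \<Rightarrow> 'a set list set" where
  "mt G s k = {h\<in>G. \<forall>j<length s. s!j \<in> h!(k+j)}"

lemma mt_Nil[simp]: "mt G [] k = G" by (simp add: mt_def)

lemma mt_Cons: "mt G (\<sigma>#s) k = {h\<in>mt G s (Suc k). \<sigma> \<in> h!k}"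
  unfolding mt_def by (auto simp: less_Suc_eq_0_disj)

lemma Parent_Suc[simp]: "Parent (H, Suc k) \<sigma> = Some ({h\<in>H. \<sigma>\<in>h!k}, k)"
  by (simp add: Parent_def)

lemma lev_snd: "(H,i) \<in> lev \<Sigma> G l n \<Longrightarrow> i = l - n"
  by (cases n) auto

lemma Qlev_snd: "(H,i) \<in> Qlev \<Sigma> G l k \<Longrightarrow> i = k \<and> k \<le> l"
  unfolding Qlev_def by (auto split: if_splits dest: lev_snd)

lemma Qlev_l: "Qlev \<Sigma> G l l = {(G,l)}"
  by (simp add: Qlev_def)

lemma Qlev_mem: assumes "k < l"
  shows "(H,k) \<in> Qlev \<Sigma> G l k \<longleftrightarrow> H \<subseteq> G \<and> H \<noteq> {} \<and> (\<exists>q\<in>Qlev \<Sigma> G l (Suc k). \<exists>\<sigma>\<in>\<Sigma>. Parent q \<sigma> = Some (H,k))"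
proof -
  have e: "l - k = Suc (l - Suc k)" using assms by simp
  have "Qlev \<Sigma> G l k = lev \<Sigma> G l (Suc (l - Suc k))" using assms e by (simp add: Qlev_def)
  moreover have "Qlev \<Sigma> G l (Suc k) = lev \<Sigma> G l (l - Suc k)" using assms by (simp add: Qlev_def)
  moreover have "l - Suc (l - Suc k) = k" using assms by simp
  ultimately show ?thesis by auto
qed

lemma lemA: "s \<in> lists \<Sigma> \<Longrightarrow> length s + k = l \<Longrightarrow> mt G s k \<noteq> {} \<Longrightarrow> G \<noteq> {} \<Longrightarrow> (mt G s k, k) \<in> Qlev \<Sigma> G l k"
proof (induction s arbitrary: k)
  case Nil
  then show ?case by (simp add: Qlev_l)
next
  case (Cons \<sigma> s)
  have kl: "k < l" using Cons by simp
  have ne: "mt G s (Suc k) \<noteq> {}" using Cons.prems(3) by (auto simp: mt_Cons)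
  have q: "(mt G s (Suc k), Suc k) \<in> Qlev \<Sigma> G l (Suc k)" using Cons ne by simp
  have "mt G (\<sigma>#s) k \<subseteq> G" by (auto simp: mt_def)
  moreover have "Parent (mt G s (Suc k), Suc k) \<sigma> = Some (mt G (\<sigma>#s) k, k)" by (simp add: mt_Cons)
  ultimately show ?case unfolding Qlev_mem[OF kl]
    using Cons.prems(1,3) q by (intro conjI bexI[of _ "(mt G s (Suc k), Suc k)"] bexI[of _ \<sigma>]) auto
qed

lemma lemB: "delta_hat (dl \<Sigma> G l) (H,k) s \<inter> Qlev \<Sigma> G l l \<noteq> {} \<Longrightarrow> length s + k = l \<and> H = mt G s k"
proof (induction s arbitrary: H k)
  case Nil
  then show ?case by (auto simp: Qlev_l)
next
  case (Cons \<sigma> s)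
  then obtain p where p: "p \<in> dl \<Sigma> G l (H,k) \<sigma>" and r: "delta_hat (dl \<Sigma> G l) p s \<inter> Qlev \<Sigma> G l l \<noteq> {}"
    by auto
  obtain H' k' where pe: "p = (H',k')" by (cases p)
  from p have kl: "k < l" and pq: "p \<in> Qlev \<Sigma> G l (Suc k)" and pp: "Parent p \<sigma> = Some (H,k)"
    by (auto simp: dl_def split: if_splits)
  have "k' = Suc k" using pq pe Qlev_snd by blast
  with pp pe have H: "H = {h\<in>H'. \<sigma>\<in>h!k}" by simp
  from Cons.IH[of H' k'] r pe \<open>k' = Suc k\<close> have "length s + Suc k = l \<and> H' = mt G s (Suc k)" by simp
  then show ?case using H by (simp add: mt_Cons)
qed

lemma lemC: "u@v \<in> lists \<Sigma> \<Longrightarrow> length u + length v + k = l \<Longrightarrow> mt G (u@v) k \<noteq> {} \<Longrightarrow> G \<noteq> {} \<Longrightarrow>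
   (mt G v (k+length u), k+length u) \<in> delta_hat (dl \<Sigma> G l) (mt G (u@v) k, k) u"
proof (induction u arbitrary: k)
  case Nil
  then show ?case by simp
next
  case (Cons \<sigma> u)
  have kl: "k < l" using Cons by simp
  have ne: "mt G (u@v) (Suc k) \<noteq> {}" using Cons.prems(3) by (auto simp: mt_Cons)
  have q: "(mt G (u@v) (Suc k), Suc k) \<in> Qlev \<Sigma> G l (Suc k)"
    using lemA[of "u@v" \<Sigma> "Suc k" l G] Cons.prems ne by simp
  have "(mt G (u@v) (Suc k), Suc k) \<in> dl \<Sigma> G l (mt G ((\<sigma>#u)@v) k, k) \<sigma>"
    using kl Cons.prems q by (simp add: dl_def mt_Cons)
  moreover have "(mt G v (Suc k+length u), Suc k+length u) \<in> delta_hat (dl \<Sigma> G l) (mt G (u@v) (Suc k), Suc k) u"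
    using Cons.IH[of "Suc k"] Cons.prems ne by simp
  ultimately show ?case by auto
qed

lemma lemD: "k \<le> l \<Longrightarrow> (H,k) \<in> Qlev \<Sigma> G l k \<Longrightarrow> \<exists>s\<in>lists \<Sigma>. length s + k = l \<and> mt G s k = H"
proof (induction "l - k" arbitrary: H k)
  case 0
  then have "k = l" by simp
  with 0 show ?case by (auto simp: Qlev_l intro: bexI[of _ "[]"])
next
  case (Suc n)
  have kl: "k < l" using Suc by simp
  from Suc.prems(2)[unfolded Qlev_mem[OF kl]] obtain q \<sigma> where
    q: "q \<in> Qlev \<Sigma> G l (Suc k)" and s: "\<sigma>\<in>\<Sigma>" and pp: "Parent q \<sigma> = Some (H,k)" by auto
  obtain H' k' where qe: "q = (H',k')" by (cases q)
  have "k' = Suc k" using q qe Qlev_snd by blast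
  with pp qe have H: "H = {h\<in>H'. \<sigma>\<in>h!k}" by simp
  have "\<exists>s\<in>lists \<Sigma>. length s + Suc k = l \<and> mt G s (Suc k) = H'"
    using Suc.hyps(1)[of "Suc k" H'] Suc.hyps(2) kl q qe \<open>k' = Suc k\<close> by simp
  then obtain s' where "s'\<in>lists \<Sigma>" "length s' + Suc k = l" "mt G s' (Suc k) = H'" by auto
  then show ?case using H s by (intro bexI[of _ "\<sigma>#s'"]) (auto simp: mt_Cons)
qed

lemma Qlev_ne: assumes G: "G \<noteq> {}" and q: "(H,k) \<in> Qlev \<Sigma> G l k" shows "H \<noteq> {}"
proof (cases "k < l")
  case True
  show ?thesis using q Qlev_mem[OF True] by blast
next
  case False
  have "k \<le> l" using Qlev_snd[OF q] by simp
  then have "k = l" using False by simp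
  then show ?thesis using q G by (simp add: Qlev_l)
qed

lemma simpleI: "A = (Q,S,D,Qa,F) \<Longrightarrow> (\<forall>q\<in>Q. nfa_accessible A q) \<Longrightarrow> (\<forall>q\<in>Q. nfa_lang A q \<noteq> {}) \<Longrightarrow>
  (\<forall>p\<in>Q. \<forall>q\<in>Q. p \<noteq> q \<longrightarrow> nfa_lang A p \<inter> nfa_lang A q = {}) \<Longrightarrow> simple_nfa A"
  by (simp add: simple_nfa_def)

theorem mainTheorem6:
  fixes \<Sigma> :: "'a set" and G :: "'a set list set" and l :: nat
  assumes "finite \<Sigma>"
    and "l \<ge> 1"
    and "G \<subseteq> gen_strings \<Sigma> l"
    and "finite G"
    and "G \<noteq> {}"
  shows "simple_nfa (NFA_of \<Sigma> l G)"
proof -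
  let ?A = "NFA_of \<Sigma> l G"
  have lang: "nfa_lang ?A (H,k) = {s\<in>lists \<Sigma>. length s + k = l \<and> mt G s k = H}"
    if "(H,k) \<in> Qlev \<Sigma> G l k" for H k
  proof -
    have ne: "H \<noteq> {}" using Qlev_ne assms(5) that by blast
    have "s \<in> nfa_lang ?A (H,k) \<longleftrightarrow> s \<in> lists \<Sigma> \<and> length s + k = l \<and> mt G s k = H" for s
    proof
      assume "s \<in> nfa_lang ?A (H,k)"
      then show "s \<in> lists \<Sigma> \<and> length s + k = l \<and> mt G s k = H"
        unfolding NFA_of_eq nfa_lang_def using lemB by fastforce
    next
      assume a: "s \<in> lists \<Sigma> \<and> length s + k = l \<and> mt G s k = H"
      have "(mt G [] (k + length s), k + length s) \<in> delta_hat (dl \<Sigma> G l) (mt G (s@[]) k, k) s"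
        using lemC[of s "[]" \<Sigma> k l G] a ne assms(5) by simp
      then have "(G,l) \<in> delta_hat (dl \<Sigma> G l) (H, k) s" using a by (simp add: add.commute)
      then show "s \<in> nfa_lang ?A (H,k)" unfolding NFA_of_eq nfa_lang_def using a by (auto simp: Qlev_l)
    qed
    then show ?thesis by blast
  qed
  have st: "\<exists>H k. q = (H,k) \<and> k \<le> l \<and> (H,k) \<in> Qlev \<Sigma> G l k" if "q \<in> (\<Union>i\<in>{0..l}. Qlev \<Sigma> G l i)" for q
    using that by (cases q) (auto dest: Qlev_snd)
  have acc: "nfa_accessible ?A (H,k)" if k: "k \<le> l" and q: "(H,k) \<in> Qlev \<Sigma> G l k" for H k
  proof -
    obtain s where s: "s\<in>lists \<Sigma>" "length s + k = l" "mt G s k = H" using lemD[OF k q] by blast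
    have "H \<noteq> {}" using Qlev_ne assms(5) q by blast
    then obtain h where h: "h \<in> H" by blast
    then have hG: "h \<in> G" using s by (auto simp: mt_def)
    then have hgen: "length h = l" "\<forall>x\<in>set h. x \<noteq> {} \<and> x \<subseteq> \<Sigma>" using assms(3) by (auto simp: gen_strings_def)
    define u where "u = map (\<lambda>j. SOME x. x \<in> h!j) [0..<k]"
    have uj: "u!j \<in> h!j \<and> u!j \<in> \<Sigma>" if "j < k" for j
    proof -
      have "h!j \<in> set h" using that k hgen(1) by simp
      then have "h!j \<noteq> {}" "h!j \<subseteq> \<Sigma>" using hgen(2) by auto
      then have "(SOME x. x \<in> h!j) \<in> h!j" by (auto intro: someI_ex)
      then show ?thesis using that \<open>h!j \<subseteq> \<Sigma>\<close> unfolding u_def by auto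
    qed
    have lu: "length u = k" by (simp add: u_def)
    have ul: "u \<in> lists \<Sigma>" using uj lu by (auto simp: in_set_conv_nth)
    have "h \<in> mt G (u@s) 0"
      unfolding mt_def
    proof (intro CollectI conjI allI impI hG)
      fix j assume "j < length (u@s)"
      show "(u@s)!j \<in> h!(0+j)"
      proof (cases "j < k")
        case True then show ?thesis using uj lu by (simp add: nth_append)
      next
        case False
        then have "j - k < length s" using \<open>j < length (u@s)\<close> lu by simp
        then have "s!(j-k) \<in> h!(k+(j-k))" using h s(3) by (auto simp: mt_def)
        then show ?thesis using False lu by (simp add: nth_append)
      qed
    qed
    then have ne: "mt G (u@s) 0 \<noteq> {}" by blast
    have "(mt G s (0+length u), 0+length u) \<in> delta_hat (dl \<Sigma> G l) (mt G (u@s) 0, 0) u"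
      using lemC[of u s \<Sigma> 0 l G] ul s lu ne assms(5) by simp
    then have "(H,k) \<in> delta_hat (dl \<Sigma> G l) (mt G (u@s) 0, 0) u" using lu s by simp
    moreover have "(mt G (u@s) 0, 0) \<in> Qlev \<Sigma> G l 0"
      using lemA[of "u@s" \<Sigma> 0 l G] ul s lu ne assms(5) by simp
    ultimately show ?thesis unfolding nfa_accessible_def NFA_of_eq using ul by auto
  qed
  show ?thesis
  proof (rule simpleI[OF NFA_of_eq])
    show "\<forall>q\<in>(\<Union>i\<in>{0..l}. Qlev \<Sigma> G l i). nfa_accessible ?A q"
    proof
      fix q assume "q \<in> (\<Union>i\<in>{0..l}. Qlev \<Sigma> G l i)"
      then obtain H k where "q = (H,k)" "k \<le> l" "(H,k) \<in> Qlev \<Sigma> G l k" using st by blast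
      then show "nfa_accessible ?A q" using acc by simp
    qed
    show "\<forall>q\<in>(\<Union>i\<in>{0..l}. Qlev \<Sigma> G l i). nfa_lang ?A q \<noteq> {}"
    proof
      fix q assume "q \<in> (\<Union>i\<in>{0..l}. Qlev \<Sigma> G l i)"
      then obtain H k where qq: "q = (H,k)" "k \<le> l" "(H,k) \<in> Qlev \<Sigma> G l k" using st by blast
      then obtain s where "s\<in>lists \<Sigma>" "length s + k = l" "mt G s k = H" using lemD by blast
      then have "s \<in> nfa_lang ?A q" using lang[OF qq(3)] qq(1) by simp
      then show "nfa_lang ?A q \<noteq> {}" by blast
    qed
    show "\<forall>p\<in>(\<Union>i\<in>{0..l}. Qlev \<Sigma> G l i). \<forall>q\<in>(\<Union>i\<in>{0..l}. Qlev \<Sigma> G l i). p \<noteq> q \<longrightarrow> nfa_lang ?A p \<inter> nfa_lang ?A q = {}"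
    proof (intro ballI impI)
      fix p q assume "p \<in> (\<Union>i\<in>{0..l}. Qlev \<Sigma> G l i)" "q \<in> (\<Union>i\<in>{0..l}. Qlev \<Sigma> G l i)" "p \<noteq> q"
      then obtain H k H' k' where pp: "p = (H,k)" "(H,k) \<in> Qlev \<Sigma> G l k"
        and qq: "q = (H',k')" "(H',k') \<in> Qlev \<Sigma> G l k'" using st by metis
      show "nfa_lang ?A p \<inter> nfa_lang ?A q = {}"
        using lang[OF pp(2)] lang[OF qq(2)] pp(1) qq(1) \<open>p \<noteq> q\<close> by auto
    qed
  qed
qed

end
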